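(* Let $A,B\in\operatorname{Sym}(n,\mathbb{R})$ with $\operatorname{tr}A=\operatorname{tr}B=0$, and assume $\Gamma_A\subset\Gamma_B$, where $\Gamma_M:=\{z\in\mathbb{R}^n:{}^tzMz\le0\}$. Then there is $c\in\mathbb{R}$ with $B=cA$. *)

theory Defs
  imports "HOL-Analysis.Analysis"
begin

definition Gamma :: "real^'n^'n \<Rightarrow> (real^'n) set" where
  "Gamma M = {z. z \<bullet> (M *v z) \<le> 0}"

end

theory Submission
  imports Defs
begin

lemma quad_sym:
  fixes A :: "real^'n^'n"
  assumes "transpose A = A"
  shows "y \<bullet> (A *v x) = x \<bullet> (A *v y)"
proof -
  have "y \<bullet> (A *v x) = (y v* A) \<bullet> x" by (simp add: dot_lmul_matrix)
  also have "y v* A = A *v y" by (metis assms vector_transpose_matrix)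
  finally show ?thesis by (simp add: inner_commute)
qed

lemma quad_line:
  fixes A :: "real^'n^'n"
  assumes "transpose A = A"
  shows "(x + t *\<^sub>R y) \<bullet> (A *v (x + t *\<^sub>R y)) =
    x \<bullet> (A *v x) + 2 * t * (x \<bullet> (A *v y)) + t^2 * (y \<bullet> (A *v y))"
  using quad_sym[OF assms, of y x]
  by (simp add: matrix_vector_right_distrib matrix_vector_mult_scaleR inner_add_left
      inner_add_right algebra_simps power2_eq_square)

lemma quad_axis:
  fixes A :: "real^'n^'n"
  shows "axis i 1 \<bullet> (A *v axis j 1) = A $ i $ j"
  by (simp add: inner_axis' matrix_vector_mult_basis column_def)

lemma psd_trace0:
  fixes P :: "real^'n^'n"
  assumes sym: "transpose P = P" and tr: "trace P = 0"
    and psd: "\<And>z. z \<bullet> (P *v z) \<ge> 0"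
  shows "P = 0"
proof -
  have diag: "P $ i $ i \<ge> 0" for i using psd[of "axis i 1"] by (simp add: quad_axis)
  have d0: "P $ i $ i = 0" for i
  proof -
    have "sum (\<lambda>i. P$i$i) UNIV = 0" using tr by (simp add: trace_def)
    then show ?thesis using diag sum_nonneg_eq_0_iff[of UNIV "\<lambda>i. P$i$i"] by auto
  qed
  have "P $ i $ j = 0" for i j
  proof (cases "i = j")
    case True then show ?thesis using d0 by simp
  next
    case False
    have "0 \<le> 2 * t * P$i$j" for t
      using psd[of "axis i 1 + t *\<^sub>R axis j 1"] quad_line[OF sym, of "axis i 1" t "axis j 1"]
      by (simp add: quad_axis d0)
    from this[of 1] this[of "-1"] show ?thesis by simp
  qed
  then show ?thesis by (simp add: vec_eq_iff)
qed

lemma key_ineq: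
  fixes A B :: "real^'n^'n"
  assumes sA: "transpose A = A" and sB: "transpose B = B"
    and inc: "\<And>z. z \<bullet> (A *v z) \<le> 0 \<Longrightarrow> z \<bullet> (B *v z) \<le> 0"
    and z: "z \<bullet> (A *v z) > 0" and w: "w \<bullet> (A *v w) < 0"
  shows "z \<bullet> (B *v z) * (- (w \<bullet> (A *v w))) \<le> (- (w \<bullet> (B *v w))) * (z \<bullet> (A *v z))"
proof (rule ccontr)
  define a where "a = z \<bullet> (A *v z)"
  define b where "b = - (w \<bullet> (A *v w))"
  define p where "p = z \<bullet> (A *v w)"
  define al where "al = z \<bullet> (B *v z)"
  define be where "be = - (w \<bullet> (B *v w))"
  define r where "r = z \<bullet> (B *v w)"
  have a: "a > 0" and b: "b > 0" using z w a_def b_def by auto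
  assume "\<not> ?thesis"
  hence K: "al * b - be * a > 0" unfolding a_def b_def al_def be_def by simp
  define L where "L = r * b - p * be"
  define s where "s = sqrt (p^2 + a*b)"
  have nn: "p^2 + a*b \<ge> 0" using a b by (intro add_nonneg_nonneg) auto
  have s2: "s * s = p^2 + a*b" using nn unfolding s_def by (metis real_sqrt_pow2 power2_eq_square)
  have s0: "s \<ge> 0" using nn by (simp add: s_def)
  have "\<bar>p\<bar>^2 < s^2" using s2 a b by (simp add: power2_eq_square)
  hence sp: "\<bar>p\<bar> < s" using s0 by (rule power2_less_imp_less)
  define t where "t = (if L \<ge> 0 then (p+s)/b else (p-s)/b)"
  have u: "b*t = p + s \<or> b*t = p - s" using b by (auto simp: t_def)
  have "b * (a + 2*t*p - t^2*b) = a*b + 2*p*(b*t) - (b*t)*(b*t)"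
    by (simp add: algebra_simps power2_eq_square)
  also have "\<dots> = 0"
  proof -
    have e: "a * b + 2 * p * v - v * v = 0" if "v = p + s \<or> v = p - s" for v :: real
      using s2 that by (elim disjE; hypsubst; simp add: algebra_simps power2_eq_square)
    show ?thesis by (rule e[OF u])
  qed
  finally have f0: "a + 2*t*p - t^2*b = 0" using b by simp
  have tL: "t * L \<ge> 0"
  proof (cases "L \<ge> 0")
    case True
    have "(p+s)/b \<ge> 0" using sp b by simp
    moreover have tt: "t = (p+s)/b" using True by (simp add: t_def)
    ultimately show ?thesis unfolding tt using True by (intro mult_nonneg_nonneg)
  next
    case False
    have "(p-s)/b \<le> 0" using sp b by (simp add: divide_nonpos_pos)
    moreover have tt: "t = (p-s)/b" using False by (simp add: t_def)
    ultimately show ?thesis unfolding tt using False by (intro mult_nonpos_nonpos) auto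
  qed
  have fA: "(z + t *\<^sub>R w) \<bullet> (A *v (z + t *\<^sub>R w)) \<le> 0"
    using quad_line[OF sA, of z t w] f0 by (simp add: a_def b_def p_def)
  have gB: "(z + t *\<^sub>R w) \<bullet> (B *v (z + t *\<^sub>R w)) = al + 2 * t * r - t^2 * be"
    using quad_line[OF sB, of z t w] by (simp add: al_def be_def r_def)
  have h: "b * (al + 2 * t * r - t^2 * be) - be * (a + 2 * t * p - t^2 * b)
      = (al * b - be * a) + 2 * (t * L)" by (simp add: algebra_simps L_def)
  hence pos: "b * (al + 2 * t * r - t^2 * be) > 0"
    using f0 K tL by simp
  have "al + 2 * t * r - t^2 * be \<le> 0" using inc[OF fA] gB by simp
  hence "b * (al + 2 * t * r - t^2 * be) \<le> 0" using b by (simp add: mult_nonneg_nonpos)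
  then show False using pos by linarith
qed

lemma div_aux:
  fixes a b x y :: real
  assumes a: "a > 0" and b: "b < 0" and k: "x * (- b) \<le> (- y) * a"
  shows "x / a \<le> y / b"
proof -
  have p: "a * (- b) > 0" using a b by (intro mult_pos_pos) auto
  have e1: "x / a = (x * (- b)) / (a * (- b))" using a b by simp
  have e2: "y / b = ((- y) * a) / (a * (- b))" using a b by simp
  show ?thesis unfolding e1 e2 using k p by (intro divide_right_mono) auto
qed

lemma ratio_ineq:
  fixes A B :: "real^'n^'n"
  assumes sA: "transpose A = A" and sB: "transpose B = B"
    and inc: "\<And>z. z \<bullet> (A *v z) \<le> 0 \<Longrightarrow> z \<bullet> (B *v z) \<le> 0"
    and z: "z \<bullet> (A *v z) > 0" and w: "w \<bullet> (A *v w) < 0"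
  shows "z \<bullet> (B *v z) / (z \<bullet> (A *v z)) \<le> w \<bullet> (B *v w) / (w \<bullet> (A *v w))"
proof -
  have k: "z \<bullet> (B *v z) * (- (w \<bullet> (A *v w))) \<le> (- (w \<bullet> (B *v w))) * (z \<bullet> (A *v z))"
    by (rule key_ineq[OF sA sB inc z w])
  show ?thesis using z w k by (rule div_aux)
qed

lemma neg_quad: "z \<bullet> ((- M) *v z) = - (z \<bullet> ((M::real^'n^'n) *v z))"
proof -
  have "(- M) *v z = - (M *v z)" by (simp add: matrix_vector_mult_def vec_eq_iff sum_negf)
  then show ?thesis by simp
qed

lemma neg_trace: "trace (- (M::real^'n^'n)) = - trace M"
  by (simp add: trace_def sum_negf)

lemma neg_transpose: "transpose M = M \<Longrightarrow> transpose (- (M::real^'n^'n)) = - M"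
  by (simp add: transpose_def vec_eq_iff)

theorem theorem2p2:
  fixes A B :: "real^'n^'n"
  assumes "transpose A = A" and "transpose B = B"
    and "trace A = 0" and "trace B = 0"
    and "Gamma A \<subseteq> Gamma B"
  shows "\<exists>c::real. B = c *\<^sub>R A"
proof -
  note sA = assms(1) and sB = assms(2)
  have inc: "z \<bullet> (A *v z) \<le> 0 \<Longrightarrow> z \<bullet> (B *v z) \<le> 0" for z
  proof -
    assume "z \<bullet> (A *v z) \<le> 0"
    hence "z \<in> Gamma A" unfolding Gamma_def by simp
    hence "z \<in> Gamma B" using assms(5) by (rule rev_subsetD)
    thus ?thesis unfolding Gamma_def by simp
  qed
  show ?thesis
  proof (cases "A = 0")
    case True
    have "- B = 0"
    proof (rule psd_trace0)
      show "transpose (- B) = - B" by (rule neg_transpose[OF sB])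
      show "trace (- B) = 0" using assms(4) by (simp add: neg_trace)
      fix z
      have "z \<bullet> (B *v z) \<le> 0" by (rule inc) (simp add: True)
      then show "0 \<le> z \<bullet> (- B *v z)" by (simp add: neg_quad)
    qed
    then have "B = 0 *\<^sub>R A" by simp
    then show ?thesis by (rule exI)
  next
    case False
    have ex1: "\<exists>z0. z0 \<bullet> (A *v z0) > 0"
    proof (rule ccontr)
      assume nz: "\<not> ?thesis"
      have "- A = 0"
      proof (rule psd_trace0)
        show "transpose (- A) = - A" by (rule neg_transpose[OF sA])
        show "trace (- A) = 0" using assms(3) by (simp add: neg_trace)
        fix z
        have "\<not> z \<bullet> (A *v z) > 0" using nz by blast
        then show "0 \<le> z \<bullet> (- A *v z)" by (simp add: neg_quad)
      qed
      then show False using False by simp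
    qed
    then obtain z0 where z0: "z0 \<bullet> (A *v z0) > 0" by blast
    have ex2: "\<exists>w0. w0 \<bullet> (A *v w0) < 0"
    proof (rule ccontr)
      assume nz: "\<not> ?thesis"
      have "A = 0"
      proof (rule psd_trace0)
        show "transpose A = A" by (rule sA)
        show "trace A = 0" by (rule assms(3))
        fix z
        have "\<not> z \<bullet> (A *v z) < 0" using nz by blast
        then show "0 \<le> z \<bullet> (A *v z)" by simp
      qed
      then show False using False by simp
    qed
    then obtain w0 where w0: "w0 \<bullet> (A *v w0) < 0" by blast
    define S where "S = (\<lambda>z. z \<bullet> (B *v z) / (z \<bullet> (A *v z))) ` {z. z \<bullet> (A *v z) > 0}"
    define l where "l = Sup S"
    have memS: "z \<bullet> (B *v z) / (z \<bullet> (A *v z)) \<in> S" if "z \<bullet> (A *v z) > 0" for z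
      unfolding S_def using that by (intro imageI) simp
    have ne: "S \<noteq> {}" using memS[OF z0] by blast
    have bnd: "x \<le> w \<bullet> (B *v w) / (w \<bullet> (A *v w))" if "x \<in> S" "w \<bullet> (A *v w) < 0" for x w
    proof -
      from that(1) obtain z where z: "z \<bullet> (A *v z) > 0" and x: "x = z \<bullet> (B *v z) / (z \<bullet> (A *v z))"
        unfolding S_def by blast
      show ?thesis unfolding x by (rule ratio_ineq[OF sA sB inc z that(2)])
    qed
    have bdd: "bdd_above S"
      by (rule bdd_aboveI[where M = "w0 \<bullet> (B *v w0) / (w0 \<bullet> (A *v w0))"]) (rule bnd[OF _ w0])
    have up: "z \<bullet> (B *v z) / (z \<bullet> (A *v z)) \<le> l" if "z \<bullet> (A *v z) > 0" for z
      unfolding l_def by (rule cSup_upper[OF memS[OF that] bdd])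
    have lo: "l \<le> w \<bullet> (B *v w) / (w \<bullet> (A *v w))" if "w \<bullet> (A *v w) < 0" for w
      unfolding l_def by (rule cSup_least[OF ne]) (rule bnd[OF _ that])
    have psd: "z \<bullet> ((l *\<^sub>R A - B) *v z) \<ge> 0" for z
    proof -
      have eq: "z \<bullet> ((l *\<^sub>R A - B) *v z) = l * (z \<bullet> (A *v z)) - z \<bullet> (B *v z)"
        by (simp add: matrix_vector_mult_diff_rdistrib scaleR_matrix_vector_assoc[symmetric] inner_diff_right)
      consider "z \<bullet> (A *v z) > 0" | "z \<bullet> (A *v z) < 0" | "z \<bullet> (A *v z) = 0" by linarith
      then show ?thesis
      proof cases
        case 1
        have "z \<bullet> (B *v z) \<le> l * (z \<bullet> (A *v z))"
          using up[OF 1] 1 by (simp add: pos_divide_le_eq)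
        then show ?thesis using eq by simp
      next
        case 2
        have "z \<bullet> (B *v z) \<le> l * (z \<bullet> (A *v z))"
          using lo[OF 2] 2 by (simp add: le_divide_eq)
        then show ?thesis using eq by simp
      next
        case 3 then show ?thesis using inc[of z] eq by simp
      qed
    qed
    have "l *\<^sub>R A - B = 0"
    proof (rule psd_trace0[OF _ _ psd])
      show "transpose (l *\<^sub>R A - B) = l *\<^sub>R A - B"
        using sA sB by (simp add: transpose_def vec_eq_iff)
      show "trace (l *\<^sub>R A - B) = 0"
        using assms(3,4) by (simp add: trace_def sum_subtractf sum_distrib_left[symmetric])
    qed
    then have "B = l *\<^sub>R A" by simp
    then show ?thesis by (rule exI)
  qed
qed

end
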